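(* Let $M\ge 2$ and let $L^{(1)},\dots,L^{(M)}$ and $L=\sum_{l=1}^{M}L^{(l)}$ be the $N^{(1)}\times N^{(1)}$ matrices of a hierarchical system as described in the context. Then \[ \lambda(L)=\{0\}\cup\big(\lambda(L^{(1)})\setminus\{0\}\big)\cup\cdots\cup\big(\lambda(L^{(M)})\setminus\{0\}\big), \] and among all the eigenvalues of $L$ (the $N^{(1)}$ eigenvalues counted with algebraic multiplicity) exactly one equals $0$.
   Context: Hierarchical structure. Fix an integer $M\ge 2$ (number of layers) and positive integers $N^{(1)},\dots,N^{(M)}$; set $N^{(M+1)}:=1$. For each $l\in\{1,\dots,M\}$ the $N^{(l)}$ nodes of layer $l$ are partitioned into $N^{(l+1)}$ groups $G^{(l)}_1,\dots,G^{(l)}_{N^{(l+1)}}$ of sizes $k^{(l)}_p\ge 1$ (so $\sum_p k^{(l)}_p=N^{(l)}$), numbered consecutively: group $G^{(l)}_p$ consists of the nodes $\sum_{m<p}k^{(l)}_m+1,\dots,\sum_{m\le p}k^{(l)}_m$ of layer $l$. For $l\le M-1$, group $G^{(l)}_p$ is the subordinate group of node $p$ of layer $l+1$. Each group $G^{(l)}_p$ carries a connected undirected graph with binary (0/1) adjacency matrix; $L^{(l)}_p\in\mathbb{R}^{k^{(l)}_p\times k^{(l)}_p}$ is its Laplacian (diagonal degree matrix minus adjacency matrix), and $L^{(l)}_D=\mathrm{diag}(L^{(l)}_1,\dots,L^{(l)}_{N^{(l+1)}})\in\mathbb{R}^{N^{(l)}\times N^{(l)}}$ (block diagonal). Weights: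 fix positive constants $a_1,\dots,a_{N^{(1)}}$; set $a^{(1)}_i=a_i$ and recursively $a^{(l+1)}_p=\sum_{i\in G^{(l)}_p}a^{(l)}_i$. Let $K^{(l)}=\mathrm{diag}(a^{(l)}_1,\dots,a^{(l)}_{N^{(l)}})^{-1}$. For $l=1,\dots,M-1$: $B^{(l)}=\mathrm{diag}(\mathbf{1}_{k^{(l)}_1},\dots,\mathbf{1}_{k^{(l)}_{N^{(l+1)}}})\in\mathbb{R}^{N^{(l)}\times N^{(l+1)}}$ (block diagonal, $\mathbf{1}_k$ the all-ones column vector of length $k$), and $C^{(l)}=\mathrm{diag}(C^{(l)}_1,\dots,C^{(l)}_{N^{(l+1)}})\in\mathbb{R}^{N^{(l+1)}\times N^{(l)}}$ (block diagonal), where each $C^{(l)}_p\in\mathbb{R}^{1\times k^{(l)}_p}$ is a row vector with nonnegative entries summing to $1$. Define $L^{(1)}=K^{(1)}L^{(1)}_D$ and, for $l=2,\dots,M$, $L^{(l)}=B^{(1)}B^{(2)}\cdots B^{(l-1)}\,K^{(l)}L^{(l)}_D\,C^{(l-1)}\cdots C^{(2)}C^{(1)}$; all are $N^{(1)}\times N^{(1)}$. $\lambda(A)$ denotes the set of eigenvalues of a square matrix $A$. *)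

theory Defs
  imports "Jordan_Normal_Form.Char_Poly"
begin

text \<open>Layers are numbered 1..M, nodes of layer l are 0..<N l (0-based),
  groups of layer l are numbered 0..<N (l+1).  k l p is the size of group p of layer l.\<close>

definition grp :: "(nat \<Rightarrow> nat \<Rightarrow> nat) \<Rightarrow> nat \<Rightarrow> nat \<Rightarrow> nat set" where
  "grp k l p = {(\<Sum>m<p. k l m) ..< (\<Sum>m<Suc p. k l m)}"

fun wt :: "(nat \<Rightarrow> nat \<Rightarrow> nat) \<Rightarrow> (nat \<Rightarrow> real) \<Rightarrow> nat \<Rightarrow> nat \<Rightarrow> real" where
  "wt k a 0 i = a i"
| "wt k a (Suc 0) i = a i"
| "wt k a (Suc (Suc l)) p = (\<Sum>i\<in>grp k (Suc l) p. wt k a (Suc l) i)"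

definition LapD :: "(nat \<Rightarrow> nat) \<Rightarrow> (nat \<Rightarrow> nat \<Rightarrow> nat \<Rightarrow> bool) \<Rightarrow> nat \<Rightarrow> real mat" where
  "LapD N adj l = mat (N l) (N l) (\<lambda>(i,j).
     if i = j then real (card {q. q < N l \<and> adj l i q}) else if adj l i j then -1 else 0)"

definition Kmat :: "(nat \<Rightarrow> nat) \<Rightarrow> (nat \<Rightarrow> nat \<Rightarrow> nat) \<Rightarrow> (nat \<Rightarrow> real) \<Rightarrow> nat \<Rightarrow> real mat" where
  "Kmat N k a l = mat (N l) (N l) (\<lambda>(i,j). if i = j then 1 / wt k a l i else 0)"

definition Bmat :: "(nat \<Rightarrow> nat) \<Rightarrow> (nat \<Rightarrow> nat \<Rightarrow> nat) \<Rightarrow> nat \<Rightarrow> real mat" where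
  "Bmat N k l = mat (N l) (N (Suc l)) (\<lambda>(i,p). if i \<in> grp k l p then 1 else 0)"

definition Cmat :: "(nat \<Rightarrow> nat) \<Rightarrow> (nat \<Rightarrow> nat \<Rightarrow> nat) \<Rightarrow> (nat \<Rightarrow> nat \<Rightarrow> real) \<Rightarrow> nat \<Rightarrow> real mat" where
  "Cmat N k c l = mat (N (Suc l)) (N l) (\<lambda>(p,i). if i \<in> grp k l p then c l i else 0)"

text \<open>Bprod l = B^(1) ... B^(l-1)  (N1 x N l);  Cprod l = C^(l-1) ... C^(1) (N l x N1)\<close>
fun Bprod :: "(nat \<Rightarrow> nat) \<Rightarrow> (nat \<Rightarrow> nat \<Rightarrow> nat) \<Rightarrow> nat \<Rightarrow> real mat" where
  "Bprod N k 0 = 1\<^sub>m (N 1)"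
| "Bprod N k (Suc 0) = 1\<^sub>m (N 1)"
| "Bprod N k (Suc (Suc l)) = Bprod N k (Suc l) * Bmat N k (Suc l)"

fun Cprod :: "(nat \<Rightarrow> nat) \<Rightarrow> (nat \<Rightarrow> nat \<Rightarrow> nat) \<Rightarrow> (nat \<Rightarrow> nat \<Rightarrow> real) \<Rightarrow> nat \<Rightarrow> real mat" where
  "Cprod N k c 0 = 1\<^sub>m (N 1)"
| "Cprod N k c (Suc 0) = 1\<^sub>m (N 1)"
| "Cprod N k c (Suc (Suc l)) = Cmat N k c (Suc l) * Cprod N k c (Suc l)"

text \<open>L^(l) for l \<ge> 1 (for l = 1 this is K^(1) L_D^(1))\<close>
definition Lmat :: "(nat \<Rightarrow> nat) \<Rightarrow> (nat \<Rightarrow> nat \<Rightarrow> nat) \<Rightarrow> (nat \<Rightarrow> nat \<Rightarrow> nat \<Rightarrow> bool)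
    \<Rightarrow> (nat \<Rightarrow> real) \<Rightarrow> (nat \<Rightarrow> nat \<Rightarrow> real) \<Rightarrow> nat \<Rightarrow> real mat" where
  "Lmat N k adj a c l = Bprod N k l * (Kmat N k a l * LapD N adj l) * Cprod N k c l"

definition Ltot :: "(nat \<Rightarrow> nat) \<Rightarrow> (nat \<Rightarrow> nat \<Rightarrow> nat) \<Rightarrow> (nat \<Rightarrow> nat \<Rightarrow> nat \<Rightarrow> bool)
    \<Rightarrow> (nat \<Rightarrow> real) \<Rightarrow> (nat \<Rightarrow> nat \<Rightarrow> real) \<Rightarrow> nat \<Rightarrow> real mat" where
  "Ltot N k adj a c M = mat (N 1) (N 1) (\<lambda>ij. \<Sum>l=1..M. Lmat N k adj a c l $$ ij)"

definition eigs :: "real mat \<Rightarrow> complex set" where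
  "eigs A = {z. eigenvalue (map_mat complex_of_real A) z}"

definition alg_mult :: "real mat \<Rightarrow> complex \<Rightarrow> nat" where
  "alg_mult A z = order z (char_poly (map_mat complex_of_real A))"

end

theory Submission
  imports Defs
begin


lemma mult3_vec:
  assumes "P \<in> carrier_mat n m" "X \<in> carrier_mat m k" "Q \<in> carrier_mat k l" "v \<in> carrier_vec l"
  shows "(P * X * Q) *\<^sub>v v = P *\<^sub>v (X *\<^sub>v (Q *\<^sub>v v))"
proof -
  have "P * X \<in> carrier_mat n k" using assms by simp
  then have "(P * X * Q) *\<^sub>v v = (P * X) *\<^sub>v (Q *\<^sub>v v)" using assms assoc_mult_mat_vec by blast
  also have "\<dots> = P *\<^sub>v (X *\<^sub>v (Q *\<^sub>v v))" using assms assoc_mult_mat_vec mult_mat_vec_carrier by blast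
  finally show ?thesis .
qed

lemma mv_zero[simp]: "A \<in> carrier_mat nr n \<Longrightarrow> A *\<^sub>v 0\<^sub>v n = 0\<^sub>v nr"
  by (rule eq_vecI, auto)

lemma zero_mat_mv[simp]: "w \<in> carrier_vec m \<Longrightarrow> 0\<^sub>m n m *\<^sub>v w = 0\<^sub>v n"
  by (rule eq_vecI) (auto simp: scalar_prod_def)

lemma smult_vec_eq_zero:
  fixes v :: "'a::field vec"
  assumes "\<mu> \<noteq> 0" "v \<in> carrier_vec n" "\<mu> \<cdot>\<^sub>v v = 0\<^sub>v n" shows "v = 0\<^sub>v n"
proof (rule eq_vecI)
  fix i assume i: "i < dim_vec (0\<^sub>v n)"
  have "\<mu> * v $ i = 0" using arg_cong[OF assms(3), of "\<lambda>x. x $ i"] i assms(2) by simp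
  then show "v $ i = 0\<^sub>v n $ i" using assms(1) i by simp
qed (use assms in auto)

lemma eig_prod:
  fixes P :: "'a::field mat"
  assumes P: "P \<in> carrier_mat n m" and Q: "Q \<in> carrier_mat m n" and X: "X \<in> carrier_mat m m"
    and QP: "Q * P = 1\<^sub>m m" and mu: "\<mu> \<noteq> 0"
  shows "eigenvalue (P * X * Q) \<mu> \<longleftrightarrow> eigenvalue X \<mu>"
proof
  assume "eigenvalue (P * X * Q) \<mu>"
  then obtain v where v: "v \<in> carrier_vec n" "v \<noteq> 0\<^sub>v n" "(P * X * Q) *\<^sub>v v = \<mu> \<cdot>\<^sub>v v"
    using P X Q unfolding eigenvalue_def eigenvector_def by auto
  have e: "(P * X * Q) *\<^sub>v v = P *\<^sub>v (X *\<^sub>v (Q *\<^sub>v v))"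
    by (rule mult3_vec[OF P X Q v(1)])
  define w where "w = Q *\<^sub>v v"
  have w: "w \<in> carrier_vec m" using Q v w_def by auto
  have "Q *\<^sub>v ((P * X * Q) *\<^sub>v v) = (Q * P) *\<^sub>v (X *\<^sub>v w)"
    using e P Q X w by (simp add: w_def assoc_mult_mat_vec[of _ m n _ m])
  also have "\<dots> = X *\<^sub>v w" using QP X w by simp
  finally have Xw: "X *\<^sub>v w = \<mu> \<cdot>\<^sub>v w" using v Q unfolding w_def by (simp add: mult_mat_vec[of _ m n])
  have "w \<noteq> 0\<^sub>v m"
  proof
    assume "w = 0\<^sub>v m"
    then have "\<mu> \<cdot>\<^sub>v v = 0\<^sub>v n" using v e P X w_def by simp
    then have "v = 0\<^sub>v n" using mu v smult_vec_eq_zero by blast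
    then show False using v by auto
  qed
  then show "eigenvalue X \<mu>" using Xw w X unfolding eigenvalue_def eigenvector_def by auto
next
  assume "eigenvalue X \<mu>"
  then obtain w where w: "w \<in> carrier_vec m" "w \<noteq> 0\<^sub>v m" "X *\<^sub>v w = \<mu> \<cdot>\<^sub>v w"
    using X unfolding eigenvalue_def eigenvector_def by auto
  define v where "v = P *\<^sub>v w"
  have v: "v \<in> carrier_vec n" using P w v_def by auto
  have QPw: "Q *\<^sub>v v = w" using QP P Q w unfolding v_def by (simp add: assoc_mult_mat_vec[symmetric, of _ m n _ m])
  have "(P * X * Q) *\<^sub>v v = P *\<^sub>v (X *\<^sub>v (Q *\<^sub>v v))"
    by (rule mult3_vec[OF P X Q v(1)])
  also have "\<dots> = \<mu> \<cdot>\<^sub>v v" using QPw w P unfolding v_def by (simp add: mult_mat_vec[of _ n m])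
  finally have ev: "(P * X * Q) *\<^sub>v v = \<mu> \<cdot>\<^sub>v v" .
  have "v \<noteq> 0\<^sub>v n" using QPw w Q by auto
  then show "eigenvalue (P * X * Q) \<mu>" using ev v P X Q unfolding eigenvalue_def eigenvector_def by auto
qed


lemma eigenvalueI:
  assumes "A \<in> carrier_mat n n" "v \<in> carrier_vec n" "v \<noteq> 0\<^sub>v n" "A *\<^sub>v v = \<mu> \<cdot>\<^sub>v v"
  shows "eigenvalue A \<mu>"
  using assms unfolding eigenvalue_def eigenvector_def by auto

lemma eigenvalueE:
  assumes "A \<in> carrier_mat n n" "eigenvalue A \<mu>"
  shows "\<exists>v. v \<in> carrier_vec n \<and> v \<noteq> 0\<^sub>v n \<and> A *\<^sub>v v = \<mu> \<cdot>\<^sub>v v"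
  using assms unfolding eigenvalue_def eigenvector_def by auto

lemma solve_sq:
  fixes A :: "'a::field mat"
  assumes A: "A \<in> carrier_mat n n" and d: "det A \<noteq> 0" and b: "b \<in> carrier_vec n"
  shows "\<exists>w\<in>carrier_vec n. A *\<^sub>v w = b"
proof -
  from det_non_zero_imp_unit[OF A d, of "()"]
  obtain Bi where Bi: "Bi * A = 1\<^sub>m n" "Bi \<in> carrier_mat n n"
    unfolding Units_def ring_mat_def by auto
  have AB: "A * Bi = 1\<^sub>m n" using mat_mult_left_right_inverse[OF Bi(2) A Bi(1)] .
  have "A *\<^sub>v (Bi *\<^sub>v b) = (A * Bi) *\<^sub>v b" using A Bi b by simp
  also have "\<dots> = b" using AB b by simp
  finally show ?thesis using Bi b by (intro bexI[of _ "Bi *\<^sub>v b"]) auto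
qed

lemma sum_delta_aux:
  fixes w :: "'a::field vec"
  assumes "i < m"
  shows "(\<Sum>ia = 0..<m. - (\<mu> * (w $ ia * (if ia = i then 1 else 0)))) = - (\<mu> * w $ i)"
proof -
  have "(\<Sum>ia = 0..<m. - (\<mu> * (w $ ia * (if ia = i then 1 else 0)))) = (\<Sum>ia = 0..<m. if ia = i then - (\<mu> * w $ ia) else 0)"
    by (rule sum.cong) auto
  also have "\<dots> = - (\<mu> * w $ i)" using assms by (simp add: sum.delta)
  finally show ?thesis .
qed

lemma eig_step:
  fixes X :: "'a::field mat"
  assumes X: "X \<in> carrier_mat n n" and B: "B \<in> carrier_mat n m" and C: "C \<in> carrier_mat m n"
    and T': "T' \<in> carrier_mat m m" and CB: "C * B = 1\<^sub>m m" and XB: "X * B = 0\<^sub>m n m"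
    and T: "T = X + B * T' * C" and mu: "\<mu> \<noteq> 0"
  shows "eigenvalue T \<mu> \<longleftrightarrow> eigenvalue X \<mu> \<or> eigenvalue T' \<mu>"
proof -
  have Tc: "T \<in> carrier_mat n n" using T X B C T' by simp
  have Tv: "T *\<^sub>v v = X *\<^sub>v v + B *\<^sub>v (T' *\<^sub>v (C *\<^sub>v v))" if v: "v \<in> carrier_vec n" for v
  proof -
    have "T *\<^sub>v v = X *\<^sub>v v + (B * T' * C) *\<^sub>v v" unfolding T
      using X B T' C v by (intro add_mult_distrib_mat_vec) auto
    then show ?thesis using mult3_vec[OF B T' C v] by simp
  qed
  have XBw: "X *\<^sub>v (B *\<^sub>v w) = 0\<^sub>v n" if w: "w \<in> carrier_vec m" for w
    using assoc_mult_mat_vec[OF X B w, symmetric] XB w by simp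
  have CBw: "C *\<^sub>v (B *\<^sub>v w) = w" if w: "w \<in> carrier_vec m" for w
    using assoc_mult_mat_vec[OF C B w, symmetric] CB w by simp
  have TBw: "T *\<^sub>v (B *\<^sub>v w) = B *\<^sub>v (T' *\<^sub>v w)" if w: "w \<in> carrier_vec m" for w
    using Tv[of "B *\<^sub>v w"] XBw[OF w] CBw[OF w] B T' w by simp
  have Bnz: "B *\<^sub>v w \<noteq> 0\<^sub>v n" if w: "w \<in> carrier_vec m" "w \<noteq> 0\<^sub>v m" for w
    using CBw[OF w(1)] w C by auto
  have T'ev: "eigenvalue T \<mu>" if evT': "eigenvalue T' \<mu>"
  proof -
    obtain w where w: "w \<in> carrier_vec m" "w \<noteq> 0\<^sub>v m" "T' *\<^sub>v w = \<mu> \<cdot>\<^sub>v w"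
      using eigenvalueE[OF T' evT'] by blast
    have "T *\<^sub>v (B *\<^sub>v w) = \<mu> \<cdot>\<^sub>v (B *\<^sub>v w)" using TBw[OF w(1)] w(3) mult_mat_vec[OF B w(1)] by simp
    then show ?thesis using Bnz[OF w(1,2)] B w by (intro eigenvalueI[OF Tc, of "B *\<^sub>v w"]) auto
  qed
  show ?thesis
  proof
    assume "eigenvalue T \<mu>"
    then obtain v where v: "v \<in> carrier_vec n" "v \<noteq> 0\<^sub>v n" "T *\<^sub>v v = \<mu> \<cdot>\<^sub>v v"
      using eigenvalueE[OF Tc] by blast
    show "eigenvalue X \<mu> \<or> eigenvalue T' \<mu>"
    proof (cases "\<exists>w\<in>carrier_vec m. v = B *\<^sub>v w")
      case True
      then obtain w where w: "w \<in> carrier_vec m" "v = B *\<^sub>v w" by blast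
      have "B *\<^sub>v (T' *\<^sub>v w) = \<mu> \<cdot>\<^sub>v (B *\<^sub>v w)" using v(3) TBw[OF w(1)] w(2) by simp
      then have "C *\<^sub>v (B *\<^sub>v (T' *\<^sub>v w)) = \<mu> \<cdot>\<^sub>v (C *\<^sub>v (B *\<^sub>v w))"
        using mult_mat_vec[OF C, of "B *\<^sub>v w"] B w by simp
      then have "T' *\<^sub>v w = \<mu> \<cdot>\<^sub>v w" using CBw w T' by simp
      moreover have "w \<noteq> 0\<^sub>v m" using w v B by auto
      ultimately show ?thesis using eigenvalueI[OF T' w(1)] by blast
    next
      case False
      define y where "y = T' *\<^sub>v (C *\<^sub>v v)"
      have y: "y \<in> carrier_vec m" using y_def T' C v by simp
      have e: "X *\<^sub>v v + B *\<^sub>v y = \<mu> \<cdot>\<^sub>v v" using Tv[OF v(1)] v(3) y_def by simp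
      have "X *\<^sub>v v \<noteq> 0\<^sub>v n"
      proof
        assume "X *\<^sub>v v = 0\<^sub>v n"
        then have "B *\<^sub>v y = \<mu> \<cdot>\<^sub>v v" using e B y by simp
        then have "B *\<^sub>v ((1/\<mu>) \<cdot>\<^sub>v y) = v"
          using mult_mat_vec[OF B y] mu v by (simp add: smult_smult_assoc)
        then show False using False y by auto
      qed
      moreover have "X *\<^sub>v (X *\<^sub>v v) = \<mu> \<cdot>\<^sub>v (X *\<^sub>v v)"
      proof -
        have "X *\<^sub>v (X *\<^sub>v v + B *\<^sub>v y) = X *\<^sub>v (X *\<^sub>v v) + X *\<^sub>v (B *\<^sub>v y)"
          using X B v y by (intro mult_add_distrib_mat_vec) auto
        then show ?thesis using e XBw[OF y] mult_mat_vec[OF X v(1)] X v by simp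
      qed
      ultimately show ?thesis using eigenvalueI[OF X, of "X *\<^sub>v v"] X v by auto
    qed
  next
    assume "eigenvalue X \<mu> \<or> eigenvalue T' \<mu>"
    then show "eigenvalue T \<mu>"
    proof
      assume ev: "eigenvalue X \<mu>"
      show ?thesis
      proof (cases "eigenvalue T' \<mu>")
        case True then show ?thesis using T'ev by blast
      next
        case False
        obtain y where y: "y \<in> carrier_vec n" "y \<noteq> 0\<^sub>v n" "X *\<^sub>v y = \<mu> \<cdot>\<^sub>v y"
          using eigenvalueE[OF X ev] by blast
        have d: "det (char_matrix T' \<mu>) \<noteq> 0" using False eigenvalue_det[OF T'] by simp
        obtain w where w: "w \<in> carrier_vec m" "char_matrix T' \<mu> *\<^sub>v w = T' *\<^sub>v (C *\<^sub>v y)"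
          using solve_sq[OF _ d, of m "T' *\<^sub>v (C *\<^sub>v y)"] T' C y by auto
        have cw: "char_matrix T' \<mu> *\<^sub>v w = T' *\<^sub>v w - \<mu> \<cdot>\<^sub>v w"
          unfolding char_matrix_def using T' w by (intro eq_vecI) (auto simp: scalar_prod_def algebra_simps sum_delta_aux)
        define z where "z = y - B *\<^sub>v w"
        have z: "z \<in> carrier_vec n" using z_def y B w by simp
        have "T *\<^sub>v z = T *\<^sub>v y - T *\<^sub>v (B *\<^sub>v w)" unfolding z_def
          using Tc y B w by (intro mult_minus_distrib_mat_vec) auto
        also have "\<dots> = (\<mu> \<cdot>\<^sub>v y + B *\<^sub>v (T' *\<^sub>v (C *\<^sub>v y))) - B *\<^sub>v (T' *\<^sub>v w)"
          using Tv[OF y(1)] y(3) TBw[OF w(1)] by simp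
        also have "\<dots> = \<mu> \<cdot>\<^sub>v z"
        proof -
          have e: "T' *\<^sub>v (C *\<^sub>v y) = T' *\<^sub>v w - \<mu> \<cdot>\<^sub>v w" using w(2) cw by simp
          show ?thesis unfolding z_def e
            using B T' w y by (intro eq_vecI) (auto simp: scalar_prod_def algebra_simps sum_subtractf sum_distrib_left)
        qed
        finally have Tz: "T *\<^sub>v z = \<mu> \<cdot>\<^sub>v z" .
        have "z \<noteq> 0\<^sub>v n"
        proof
          assume "z = 0\<^sub>v n"
          then have "y = B *\<^sub>v w" unfolding z_def using y B w
            by (metis (no_types) carrier_vecD index_minus_vec(1) index_zero_vec(1) eq_vecI right_minus_eq mult_mat_vec_carrier)
          then have "\<mu> \<cdot>\<^sub>v y = 0\<^sub>v n" using y(3) XBw[OF w(1)] by simp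
          then show False using smult_vec_eq_zero[OF mu y(1)] y(2) by blast
        qed
        then show ?thesis using eigenvalueI[OF Tc z _ Tz] by blast
      qed
    next
      assume "eigenvalue T' \<mu>" then show ?thesis using T'ev by blast
    qed
  qed
qed


lemma vec_eq_sub:
  fixes a :: "'a::ab_group_add vec"
  assumes "a \<in> carrier_vec n" "b \<in> carrier_vec n" "a + b = c" shows "a = c - b"
proof (rule eq_vecI)
  fix i assume i: "i < dim_vec (c - b)"
  have "(a + b) $ i = c $ i" using assms(3) by simp
  then show "a $ i = (c - b) $ i" using assms i by (auto simp: algebra_simps)
qed (use assms in auto)

definition kerp :: "'a::field mat \<Rightarrow> 'a vec \<Rightarrow> nat \<Rightarrow> bool" where
  "kerp T u n = (\<forall>y\<in>carrier_vec n. \<forall>c. T *\<^sub>v y = c \<cdot>\<^sub>v u \<longrightarrow> (\<exists>d. y = d \<cdot>\<^sub>v u))"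

lemma ker_step:
  fixes X :: "'a::field mat"
  assumes X: "X \<in> carrier_mat n n" and B: "B \<in> carrier_mat n m" and C: "C \<in> carrier_mat m n"
    and T': "T' \<in> carrier_mat m m" and CB: "C * B = 1\<^sub>m m" and XB: "X * B = 0\<^sub>m n m"
    and T: "T = X + B * T' * C"
    and INJ: "\<forall>y\<in>carrier_vec n. \<forall>z\<in>carrier_vec m. X *\<^sub>v y = B *\<^sub>v z \<longrightarrow> (\<exists>w\<in>carrier_vec m. y = B *\<^sub>v w)"
    and u: "u \<in> carrier_vec m" and T'u: "T' *\<^sub>v u = 0\<^sub>v m" and K: "kerp T' u m"
  shows "T *\<^sub>v (B *\<^sub>v u) = 0\<^sub>v n" "kerp T (B *\<^sub>v u) n"
proof -
  have Tc: "T \<in> carrier_mat n n" using T X B C T' by simp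
  have Tv: "T *\<^sub>v v = X *\<^sub>v v + B *\<^sub>v (T' *\<^sub>v (C *\<^sub>v v))" if v: "v \<in> carrier_vec n" for v
  proof -
    have "T *\<^sub>v v = X *\<^sub>v v + (B * T' * C) *\<^sub>v v" unfolding T
      using X B T' C v by (intro add_mult_distrib_mat_vec) auto
    then show ?thesis using mult3_vec[OF B T' C v] by simp
  qed
  have XBw: "X *\<^sub>v (B *\<^sub>v w) = 0\<^sub>v n" if w: "w \<in> carrier_vec m" for w
    using assoc_mult_mat_vec[OF X B w, symmetric] XB w by simp
  have CBw: "C *\<^sub>v (B *\<^sub>v w) = w" if w: "w \<in> carrier_vec m" for w
    using assoc_mult_mat_vec[OF C B w, symmetric] CB w by simp
  have TBw: "T *\<^sub>v (B *\<^sub>v w) = B *\<^sub>v (T' *\<^sub>v w)" if w: "w \<in> carrier_vec m" for w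
    using Tv[of "B *\<^sub>v w"] XBw[OF w] CBw[OF w] B T' w by simp
  show "T *\<^sub>v (B *\<^sub>v u) = 0\<^sub>v n" using TBw[OF u] T'u B by simp
  show "kerp T (B *\<^sub>v u) n" unfolding kerp_def
  proof (intro ballI allI impI)
    fix v c assume v: "v \<in> carrier_vec n" and e: "T *\<^sub>v v = c \<cdot>\<^sub>v (B *\<^sub>v u)"
    define y where "y = T' *\<^sub>v (C *\<^sub>v v)"
    have y: "y \<in> carrier_vec m" using y_def T' C v by simp
    have "X *\<^sub>v v + B *\<^sub>v y = B *\<^sub>v (c \<cdot>\<^sub>v u)" using Tv[OF v] e y_def mult_mat_vec[OF B u] by simp
    then have "X *\<^sub>v v = B *\<^sub>v (c \<cdot>\<^sub>v u) - B *\<^sub>v y" using X B v y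
      by (intro vec_eq_sub[of _ n]) auto
    also have "\<dots> = B *\<^sub>v (c \<cdot>\<^sub>v u - y)" using B u y by (intro mult_minus_distrib_mat_vec[symmetric]) auto
    finally obtain w where w: "w \<in> carrier_vec m" "v = B *\<^sub>v w" using INJ v u y by fastforce
    have "B *\<^sub>v (T' *\<^sub>v w) = B *\<^sub>v (c \<cdot>\<^sub>v u)" using e TBw[OF w(1)] w(2) mult_mat_vec[OF B u] by simp
    then have "C *\<^sub>v (B *\<^sub>v (T' *\<^sub>v w)) = C *\<^sub>v (B *\<^sub>v (c \<cdot>\<^sub>v u))" by simp
    then have "T' *\<^sub>v w = c \<cdot>\<^sub>v u" using CBw T' w u by simp
    then obtain d where "w = d \<cdot>\<^sub>v u" using K w unfolding kerp_def by blast
    then show "\<exists>d. v = d \<cdot>\<^sub>v (B *\<^sub>v u)" using w(2) mult_mat_vec[OF B u] by auto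
  qed
qed


lemma order_one:
  fixes L :: "'a::field mat"
  assumes L: "L \<in> carrier_mat n n" and u: "u \<in> carrier_vec n" and u0: "u $ 0 \<noteq> 0"
    and n: "0 < n" and Lu: "L *\<^sub>v u = 0\<^sub>v n" and K: "kerp L u n"
  shows "order 0 (char_poly L) = 1"
proof -
  obtain n' where n': "n = Suc n'" using n by (cases n) auto
  define S where "S = mat n n (\<lambda>(i,j). if j = 0 then u $ i else if i = j then 1 else 0)"
  have S: "S \<in> carrier_mat n n" unfolding S_def by simp
  have d1: "det S = prod_list (diag_mat S)"
    by (rule det_lower_triangular[OF _ S]) (auto simp: S_def)
  have d2: "diag_mat S = S $$ (0,0) # map (\<lambda>i. S $$ (i,i)) [1..<Suc n']"
    unfolding diag_mat_def using S n' by (simp add: upt_rec)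
  have d3: "map (\<lambda>i. S $$ (i,i)) [1..<Suc n'] = map (\<lambda>i. 1) [1..<Suc n']"
    by (rule map_cong) (auto simp: S_def n')
  have dS: "det S = u $ 0" unfolding d1 d2 d3 by (simp add: S_def n' map_replicate_const)
  from det_non_zero_imp_unit[OF S, of "()"] dS u0
  obtain Si where Si: "Si * S = 1\<^sub>m n" "Si \<in> carrier_mat n n"
    unfolding Units_def ring_mat_def by auto
  have SSi: "S * Si = 1\<^sub>m n" using mat_mult_left_right_inverse[OF Si(2) S Si(1)] .
  define A where "A = Si * L * S"
  have A: "A \<in> carrier_mat n n" unfolding A_def using Si L S by simp
  have "S * A * Si = (S * Si) * L * (S * Si)" unfolding A_def using S Si L
    by (simp add: assoc_mult_mat[of _ n n _ n _ n])
  then have LA: "L = S * A * Si" using SSi L by simp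
  have sim: "similar_mat L A" unfolding similar_mat_def similar_mat_wit_def
    using LA L A S Si SSi Si by (intro exI[of _ S] exI[of _ Si]) (auto simp: Let_def)
  have SA: "S * A = L * S"
  proof -
    have "S * A = S * (Si * (L * S))" unfolding A_def using S Si L by (simp add: assoc_mult_mat[of _ n n _ n _ n])
    also have "\<dots> = (S * Si) * (L * S)" using assoc_mult_mat[of S n n Si n "L * S" n] S Si L by simp
    finally show ?thesis using SSi L S by simp
  qed
  have e0: "S *\<^sub>v unit_vec n 0 = u"
    by (rule eq_vecI) (use u n in \<open>auto simp: S_def scalar_prod_right_unit\<close>)
  have colA: "A $$ (j, 0) = 0" if j: "j < n" for j
  proof -
    have "A *\<^sub>v unit_vec n 0 = Si *\<^sub>v (L *\<^sub>v (S *\<^sub>v unit_vec n 0))"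
      unfolding A_def by (rule mult3_vec[OF Si(2) L S]) simp
    also have "\<dots> = 0\<^sub>v n" using e0 Lu Si by simp
    finally have "(A *\<^sub>v unit_vec n 0) $ j = 0" using j by simp
    then show ?thesis using A j n by (simp add: scalar_prod_right_unit)
  qed
  have cp: "char_poly L = monom 1 1 * char_poly (mat_delete A 0 0)"
    using char_poly_similar[OF sim] char_poly_0_column[OF colA A n] by simp
  define R where "R = mat_delete A 0 0"
  have R: "R \<in> carrier_mat n' n'" unfolding R_def using mat_delete_carrier[OF A] n' by simp
  have Rnz: "char_poly R \<noteq> 0" using degree_monic_char_poly[OF R] by auto
  have "\<not> eigenvalue R 0"
  proof
    assume "eigenvalue R 0"
    then obtain y where y: "y \<in> carrier_vec n'" "y \<noteq> 0\<^sub>v n'" "R *\<^sub>v y = 0 \<cdot>\<^sub>v y"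
      using eigenvalueE[OF R] by blast
    define z where "z = vec n (\<lambda>i. if i = 0 then 0 else y $ (i - 1))"
    have z: "z \<in> carrier_vec n" unfolding z_def by simp
    define t where "t = (A *\<^sub>v z) $ 0"
    have Az: "A *\<^sub>v z = t \<cdot>\<^sub>v unit_vec n 0"
    proof (rule eq_vecI)
      fix j assume "j < dim_vec (t \<cdot>\<^sub>v unit_vec n 0)"
      then have j: "j < n" by simp
      show "(A *\<^sub>v z) $ j = (t \<cdot>\<^sub>v unit_vec n 0) $ j"
      proof (cases j)
        case 0 then show ?thesis using n by (simp add: t_def)
      next
        case (Suc j')
        then have j': "j' < n'" using j n' by simp
        have "(A *\<^sub>v z) $ j = (\<Sum>i<Suc n'. A $$ (j, i) * z $ i)"
          using j A n' by (simp add: scalar_prod_def row_def z_def lessThan_atLeast0)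
        also have "\<dots> = (\<Sum>i<n'. A $$ (j, Suc i) * y $ i)"
          by (subst sum.lessThan_Suc_shift) (simp add: z_def n')
        also have "\<dots> = (R *\<^sub>v y) $ j'"
          using R A j' y(1) n' by (simp add: scalar_prod_def row_def R_def mat_delete_def Suc lessThan_atLeast0)
        also have "\<dots> = 0" using y j' by simp
        finally show ?thesis using Suc j by simp
      qed
    qed (use A in simp)
    have "L *\<^sub>v (S *\<^sub>v z) = (S * A) *\<^sub>v z" using SA L S z by simp
    also have "\<dots> = t \<cdot>\<^sub>v u" using S A z Az e0 mult_mat_vec[OF S] by simp
    finally obtain d where d: "S *\<^sub>v z = d \<cdot>\<^sub>v u" using K S z unfolding kerp_def by fastforce
    have "z = Si *\<^sub>v (S *\<^sub>v z)" using Si S z by (simp add: assoc_mult_mat_vec[symmetric, of _ n n _ n])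
    also have "\<dots> = d \<cdot>\<^sub>v (Si *\<^sub>v (S *\<^sub>v unit_vec n 0))" using d e0 mult_mat_vec[OF Si(2)] u by simp
    also have "Si *\<^sub>v (S *\<^sub>v unit_vec n 0) = unit_vec n 0" using Si S
      by (simp add: assoc_mult_mat_vec[symmetric, of _ n n _ n])
    finally have zz: "z = d \<cdot>\<^sub>v unit_vec n 0" .
    have "y = 0\<^sub>v n'"
    proof (rule eq_vecI)
      fix i assume "i < dim_vec (0\<^sub>v n')"
      then have i: "i < n'" by simp
      have "z $ Suc i = y $ i" using i n' by (simp add: z_def)
      moreover have "z $ Suc i = 0" using zz i n' by simp
      ultimately show "y $ i = 0\<^sub>v n' $ i" using i by simp
    qed (use y in simp)
    then show False using y by simp
  qed
  then have "poly (char_poly R) 0 \<noteq> 0" using eigenvalue_root_char_poly[OF R] by simp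
  then have o0: "order 0 (char_poly R) = 0" by (rule order_0I)
  have "monom (1::'a) 1 * char_poly R \<noteq> 0" using Rnz by (simp add: monom_eq_0_iff)
  then show ?thesis using cp o0 by (simp add: order_mult order_0_monom R_def)
qed




fun Tr :: "(nat \<Rightarrow> nat) \<Rightarrow> (nat \<Rightarrow> nat \<Rightarrow> nat) \<Rightarrow> (nat \<Rightarrow> nat \<Rightarrow> nat \<Rightarrow> bool)
    \<Rightarrow> (nat \<Rightarrow> real) \<Rightarrow> (nat \<Rightarrow> nat \<Rightarrow> real) \<Rightarrow> nat \<Rightarrow> nat \<Rightarrow> real mat" where
  "Tr N k adj a c M 0 = Kmat N k a M * LapD N adj M"
| "Tr N k adj a c M (Suc j) = Kmat N k a (M - Suc j) * LapD N adj (M - Suc j)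
     + Bmat N k (M - Suc j) * Tr N k adj a c M j * Cmat N k c (M - Suc j)"

abbreviation mc :: "real mat \<Rightarrow> complex mat" where "mc \<equiv> map_mat complex_of_real"

lemma mc_mult: "A \<in> carrier_mat nr n \<Longrightarrow> B \<in> carrier_mat n nc \<Longrightarrow> mc (A * B) = mc A * mc B"
  by (rule of_real_hom.mat_hom_mult)

lemma mc_add: "A \<in> carrier_mat nr nc \<Longrightarrow> B \<in> carrier_mat nr nc \<Longrightarrow> mc (A + B) = mc A + mc B"
  by (rule eq_matI) auto

lemma mc_one: "mc (1\<^sub>m n) = 1\<^sub>m n" by (rule eq_matI) auto
lemma mc_zero: "mc (0\<^sub>m n m) = 0\<^sub>m n m" by (rule eq_matI) auto

lemma re_mv:
  assumes A: "A \<in> carrier_mat nr n" and y: "y \<in> carrier_vec n"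
  shows "map_vec Re (mc A *\<^sub>v y) = A *\<^sub>v map_vec Re y"
  by (rule eq_vecI) (use A y in \<open>auto simp: scalar_prod_def row_def Re_sum\<close>)

lemma im_mv:
  assumes A: "A \<in> carrier_mat nr n" and y: "y \<in> carrier_vec n"
  shows "map_vec Im (mc A *\<^sub>v y) = A *\<^sub>v map_vec Im y"
  by (rule eq_vecI) (use A y in \<open>auto simp: scalar_prod_def row_def Im_sum\<close>)

lemma assoc5:
  assumes P: "P \<in> carrier_mat na nb" and B: "B \<in> carrier_mat nb nc" and T: "T \<in> carrier_mat nc nc"
    and C: "C \<in> carrier_mat nc nb" and Q: "Q \<in> carrier_mat nb na"
  shows "(P * B) * T * (C * Q) = P * (B * T * C) * Q"
proof -
  have "(P * B) * T * (C * Q) = (P * B) * (T * (C * Q))"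
    using P B T C Q by (intro assoc_mult_mat[of _ na nc _ nc _ na]) auto
  also have "\<dots> = P * (B * (T * (C * Q)))"
    using P B T C Q by (intro assoc_mult_mat[of _ na nb _ nc _ na]) auto
  also have "B * (T * (C * Q)) = (B * T) * (C * Q)"
    using P B T C Q by (intro assoc_mult_mat[symmetric, of _ nb nc _ nc _ na]) auto
  also have "\<dots> = (B * T * C) * Q"
    using P B T C Q by (intro assoc_mult_mat[symmetric, of _ nb nc _ nb _ na]) auto
  also have "P * ((B * T * C) * Q) = P * (B * T * C) * Q"
    using P B T C Q by (intro assoc_mult_mat[symmetric, of _ na nb _ nb _ na]) auto
  finally show ?thesis .
qed

lemma distrib3:
  assumes P: "P \<in> carrier_mat na nb" and X: "X \<in> carrier_mat nb nb" and Y: "Y \<in> carrier_mat nb nb"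
    and Q: "Q \<in> carrier_mat nb na"
  shows "P * (X + Y) * Q = P * X * Q + P * Y * Q"
proof -
  have "P * (X + Y) = P * X + P * Y" using P X Y by (rule mult_add_distrib_mat)
  then have "P * (X + Y) * Q = (P * X + P * Y) * Q" by simp
  also have "\<dots> = P * X * Q + P * Y * Q" using P X Y Q by (intro add_mult_distrib_mat) auto
  finally show ?thesis .
qed

locale hier =
  fixes M :: nat and N :: "nat \<Rightarrow> nat" and k :: "nat \<Rightarrow> nat \<Rightarrow> nat"
    and adj :: "nat \<Rightarrow> nat \<Rightarrow> nat \<Rightarrow> bool" and a :: "nat \<Rightarrow> real"
    and c :: "nat \<Rightarrow> nat \<Rightarrow> real"
  assumes M2: "M \<ge> 2"
    and Npos: "\<forall>l\<in>{1..M}. N l > 0"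
    and Ntop: "N (Suc M) = 1"
    and kpos: "\<forall>l\<in>{1..M}. \<forall>p<N (Suc l). k l p \<ge> 1"
    and ksum: "\<forall>l\<in>{1..M}. (\<Sum>p<N (Suc l). k l p) = N l"
    and adj_sym: "\<forall>l\<in>{1..M}. \<forall>i j. adj l i j \<longrightarrow> adj l j i"
    and adj_irrefl: "\<forall>l\<in>{1..M}. \<forall>i. \<not> adj l i i"
    and adj_grp: "\<forall>l\<in>{1..M}. \<forall>i j. adj l i j \<longrightarrow> (\<exists>p<N (Suc l). i \<in> grp k l p \<and> j \<in> grp k l p)"
    and adj_conn: "\<forall>l\<in>{1..M}. \<forall>p<N (Suc l). \<forall>i\<in>grp k l p. \<forall>j\<in>grp k l p.
        (i, j) \<in> {(x, y). x \<in> grp k l p \<and> y \<in> grp k l p \<and> adj l x y}\<^sup>*"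
    and apos: "\<forall>i<N 1. a i > 0"
    and c_nonneg: "\<forall>l\<in>{1..<M}. \<forall>i<N l. c l i \<ge> 0"
    and c_sum: "\<forall>l\<in>{1..<M}. \<forall>p<N (Suc l). (\<Sum>i\<in>grp k l p. c l i) = 1"
begin

lemma NposS: "l \<in> {1..M} \<Longrightarrow> N (Suc l) > 0"
  using Npos Ntop by (cases "l = M") auto

lemma grp_sub: assumes l: "l \<in> {1..M}" and p: "p < N (Suc l)" and i: "i \<in> grp k l p"
  shows "i < N l"
proof -
  have "i < (\<Sum>m<Suc p. k l m)" using i unfolding grp_def by simp
  also have "\<dots> \<le> (\<Sum>m<N (Suc l). k l m)" using p by (intro sum_mono2) auto
  also have "\<dots> = N l" using ksum l by simp
  finally show ?thesis .
qed

lemma grp_disj: assumes "i \<in> grp k l p" "i \<in> grp k l q" shows "p = q"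
proof (rule ccontr)
  have mono: "(\<Sum>m<Suc p'. k l m) \<le> (\<Sum>m<q'. k l m)" if "p' < q'" for p' q'
    using that by (intro sum_mono2) auto
  assume "p \<noteq> q"
  then consider "p < q" | "q < p" by linarith
  then show False
  proof cases
    case 1 then show False using mono[OF 1] assms unfolding grp_def by auto
  next
    case 2 then show False using mono[OF 2] assms unfolding grp_def by auto
  qed
qed

lemma prefix_cover:
  fixes f :: "nat \<Rightarrow> nat"
  shows "i < (\<Sum>m<n. f m) \<Longrightarrow> \<exists>p<n. (\<Sum>m<p. f m) \<le> i \<and> i < (\<Sum>m<Suc p. f m)"
proof (induction n)
  case 0 then show ?case by simp
next
  case (Suc n)
  show ?case
  proof (cases "i < (\<Sum>m<n. f m)")
    case True then show ?thesis using Suc.IH by (meson less_SucI)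
  next
    case False then show ?thesis using Suc.prems by (intro exI[of _ n]) auto
  qed
qed

lemma grp_cover: assumes l: "l \<in> {1..M}" and i: "i < N l"
  shows "\<exists>p<N (Suc l). i \<in> grp k l p"
  using prefix_cover[of i "k l" "N (Suc l)"] ksum l i unfolding grp_def by auto

lemma grp_first: assumes l: "l \<in> {1..M}" and p: "p < N (Suc l)"
  shows "(\<Sum>m<p. k l m) \<in> grp k l p"
proof -
  have "k l p \<ge> 1" using kpos l p by blast
  then show ?thesis unfolding grp_def by simp
qed

lemma zero_grp: assumes l: "l \<in> {1..M}" shows "0 \<in> grp k l 0"
  using grp_first[OF l NposS[OF l]] by simp

lemma wt_pos: "1 \<le> l \<Longrightarrow> l \<le> M \<Longrightarrow> i < N l \<Longrightarrow> wt k a l i > 0"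
proof (induction l arbitrary: i rule: nat_less_induct)
  case (1 l)
  show ?case
  proof (cases l)
    case 0 then show ?thesis using 1 by simp
  next
    case (Suc l')
    show ?thesis
    proof (cases l')
      case 0 then show ?thesis using 1 Suc apos by simp
    next
      case (Suc l'')
      have l1: "Suc l'' \<in> {1..M}" using 1 Suc \<open>l = Suc l'\<close> by auto
      have ip: "i < N (Suc (Suc l''))" using 1 Suc \<open>l = Suc l'\<close> by simp
      have "wt k a l i = (\<Sum>j\<in>grp k (Suc l'') i. wt k a (Suc l'') j)" using Suc \<open>l = Suc l'\<close> by simp
      also have "\<dots> > 0"
      proof (rule sum_pos)
        show "finite (grp k (Suc l'') i)" unfolding grp_def by simp
        show "grp k (Suc l'') i \<noteq> {}" using grp_first[OF l1 ip] by auto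
        fix j assume j: "j \<in> grp k (Suc l'') i"
        have "j < N (Suc l'')" using grp_sub[OF l1 ip j] .
        then show "0 < wt k a (Suc l'') j" using 1 Suc \<open>l = Suc l'\<close> l1 by auto
      qed
      finally show ?thesis .
    qed
  qed
qed

abbreviation "XX l \<equiv> Kmat N k a l * LapD N adj l"
abbreviation "BB l \<equiv> Bmat N k l"
abbreviation "CC l \<equiv> Cmat N k c l"

lemma carriers:
  "Kmat N k a l \<in> carrier_mat (N l) (N l)" "LapD N adj l \<in> carrier_mat (N l) (N l)"
  "XX l \<in> carrier_mat (N l) (N l)"
  "BB l \<in> carrier_mat (N l) (N (Suc l))" "CC l \<in> carrier_mat (N (Suc l)) (N l)"
  unfolding Kmat_def LapD_def Bmat_def Cmat_def by auto

lemma dims[simp]: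
  "dim_row (Kmat N k a l) = N l" "dim_col (Kmat N k a l) = N l"
  "dim_row (LapD N adj l) = N l" "dim_col (LapD N adj l) = N l"
  "dim_row (BB l) = N l" "dim_col (BB l) = N (Suc l)"
  "dim_row (CC l) = N (Suc l)" "dim_col (CC l) = N l"
  unfolding Kmat_def LapD_def Bmat_def Cmat_def by auto

lemma lap_mv:
  assumes l: "l \<in> {1..M}" and y: "y \<in> carrier_vec (N l)" and i: "i < N l"
  shows "(LapD N adj l *\<^sub>v y) $ i = (\<Sum>j\<in>{q. q < N l \<and> adj l i q}. y $ i - y $ j)"
proof -
  let ?nb = "{q. q < N l \<and> adj l i q}"
  have irr: "\<not> adj l i i" using adj_irrefl l by blast
  have "(LapD N adj l *\<^sub>v y) $ i = (\<Sum>j\<in>{0..<N l}. LapD N adj l $$ (i, j) * y $ j)"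
    using i y by (simp add: LapD_def scalar_prod_def row_def)
  also have "\<dots> = (\<Sum>j\<in>{0..<N l}. (if j = i then real (card ?nb) * y $ j else 0) + (if adj l i j then - y $ j else 0))"
    by (rule sum.cong) (use i irr in \<open>auto simp: LapD_def\<close>)
  also have "\<dots> = real (card ?nb) * y $ i - (\<Sum>j\<in>?nb. y $ j)"
  proof -
    have "(\<Sum>j\<in>{0..<N l}. (if adj l i j then - y $ j else 0)) = (\<Sum>j\<in>{j\<in>{0..<N l}. adj l i j}. - y $ j)"
      by (rule sum.inter_filter[symmetric]) simp
    also have "{j\<in>{0..<N l}. adj l i j} = ?nb" by auto
    finally show ?thesis using i by (simp add: sum.distrib sum_negf)
  qed
  also have "\<dots> = (\<Sum>j\<in>?nb. y $ i - y $ j)" by (simp add: sum_subtractf)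
  finally show ?thesis .
qed

lemma K_mv:
  assumes y: "y \<in> carrier_vec (N l)" and i: "i < N l"
  shows "(Kmat N k a l *\<^sub>v y) $ i = y $ i / wt k a l i"
proof -
  have "(Kmat N k a l *\<^sub>v y) $ i = (\<Sum>j\<in>{0..<N l}. (if i = j then 1 / wt k a l i else 0) * y $ j)"
    using i y by (simp add: Kmat_def scalar_prod_def row_def)
  also have "\<dots> = (\<Sum>j\<in>{0..<N l}. (if j = i then y $ j / wt k a l i else 0))"
    by (rule sum.cong) auto
  also have "\<dots> = y $ i / wt k a l i" using i by (simp add: sum.delta)
  finally show ?thesis .
qed

lemma same_grp_adj:
  assumes l: "l \<in> {1..M}" and ad: "adj l i j"
  shows "(i \<in> grp k l p) = (j \<in> grp k l p)"
proof -
  obtain q where "i \<in> grp k l q" "j \<in> grp k l q" using adj_grp l ad by blast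
  then show ?thesis using grp_disj by blast
qed

lemma LB_zero:
  assumes l: "l \<in> {1..M}"
  shows "LapD N adj l * BB l = 0\<^sub>m (N l) (N (Suc l))"
proof (rule eq_matI)
  fix i p assume i: "i < dim_row (0\<^sub>m (N l) (N (Suc l)) :: real mat)" and p: "p < dim_col (0\<^sub>m (N l) (N (Suc l)) :: real mat)"
  have cB: "col (BB l) p \<in> carrier_vec (N l)" by (simp add: col_def)
  have "(LapD N adj l * BB l) $$ (i, p) = (LapD N adj l *\<^sub>v col (BB l) p) $ i"
    using i p carriers by simp
  also have "\<dots> = (\<Sum>j\<in>{q. q < N l \<and> adj l i q}. col (BB l) p $ i - col (BB l) p $ j)"
    using lap_mv[OF l cB] i by simp
  also have "\<dots> = 0"
  proof (rule sum.neutral, intro ballI)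
    fix j assume j: "j \<in> {q. q < N l \<and> adj l i q}"
    then show "col (BB l) p $ i - col (BB l) p $ j = 0"
      using i p same_grp_adj[OF l, of i j p] by (auto simp: Bmat_def)
  qed
  finally show "(LapD N adj l * BB l) $$ (i, p) = 0\<^sub>m (N l) (N (Suc l)) $$ (i, p)" using i p by simp
qed (use carriers in auto)

lemma XB_zero:
  assumes l: "l \<in> {1..M}"
  shows "XX l * BB l = 0\<^sub>m (N l) (N (Suc l))"
proof -
  have "XX l * BB l = Kmat N k a l * (LapD N adj l * BB l)"
    using carriers by (simp add: assoc_mult_mat[of _ "N l" "N l" _ "N l" _ "N (Suc l)"])
  also have "\<dots> = 0\<^sub>m (N l) (N (Suc l))" unfolding LB_zero[OF l] using carriers right_mult_zero_mat by blast
  finally show ?thesis .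
qed

lemma CB_one:
  assumes l: "l \<in> {1..<M}"
  shows "CC l * BB l = 1\<^sub>m (N (Suc l))"
proof (rule eq_matI)
  have l': "l \<in> {1..M}" using l by auto
  fix p q assume p: "p < dim_row (1\<^sub>m (N (Suc l)) :: real mat)" and q: "q < dim_col (1\<^sub>m (N (Suc l)) :: real mat)"
  have "(CC l * BB l) $$ (p, q) = (\<Sum>i\<in>{0..<N l}. (if i \<in> grp k l p then c l i else 0) * (if i \<in> grp k l q then 1 else 0))"
    using p q carriers by (simp add: scalar_prod_def row_def col_def Cmat_def Bmat_def)
  also have "\<dots> = (\<Sum>i\<in>{0..<N l}. if i \<in> grp k l p then (if p = q then c l i else 0) else 0)"
    by (rule sum.cong) (use grp_disj in auto)
  also have "\<dots> = (\<Sum>i\<in>{i\<in>{0..<N l}. i \<in> grp k l p}. (if p = q then c l i else 0))"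
    by (rule sum.inter_filter[symmetric]) simp
  also have "{i\<in>{0..<N l}. i \<in> grp k l p} = grp k l p" using grp_sub[OF l'] p by auto
  also have "(\<Sum>i\<in>grp k l p. (if p = q then c l i else 0)) = (if p = q then 1 else 0)"
    using c_sum l p by auto
  finally show "(CC l * BB l) $$ (p, q) = 1\<^sub>m (N (Suc l)) $$ (p, q)" using p q by simp
qed (use carriers in auto)

lemma B_mv:
  assumes l: "l \<in> {1..M}" and w: "w \<in> carrier_vec (N (Suc l))" and i: "i < N l"
    and p: "p < N (Suc l)" and ip: "i \<in> grp k l p"
  shows "(BB l *\<^sub>v w) $ i = w $ p"
proof -
  have "(BB l *\<^sub>v w) $ i = (\<Sum>q\<in>{0..<N (Suc l)}. (if i \<in> grp k l q then 1 else 0) * w $ q)"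
    using i w by (simp add: Bmat_def scalar_prod_def row_def)
  also have "\<dots> = (\<Sum>q\<in>{0..<N (Suc l)}. (if q = p then w $ q else 0))"
    by (rule sum.cong) (use ip grp_disj in auto)
  also have "\<dots> = w $ p" using p by (simp add: sum.delta)
  finally show ?thesis .
qed

lemma nb_sub:
  assumes l: "l \<in> {1..M}" and p: "p < N (Suc l)" and i: "i \<in> grp k l p"
  shows "{q. q < N l \<and> adj l i q} = {q \<in> grp k l p. adj l i q}"
  using same_grp_adj[OF l, of i _ p] i grp_sub[OF l p] by auto

lemma antisym_sum_zero:
  fixes f :: "nat \<Rightarrow> nat \<Rightarrow> real"
  assumes "finite G" "\<And>i j. f j i = - f i j"
  shows "(\<Sum>i\<in>G. \<Sum>j\<in>G. f i j) = 0"
proof -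
  have "(\<Sum>i\<in>G. \<Sum>j\<in>G. f i j) = (\<Sum>j\<in>G. \<Sum>i\<in>G. f i j)" by (rule sum.swap)
  also have "\<dots> = (\<Sum>j\<in>G. \<Sum>i\<in>G. - f j i)"
    by (rule sum.cong[OF refl], rule sum.cong[OF refl]) (rule assms(2))
  also have "\<dots> = - (\<Sum>i\<in>G. \<Sum>j\<in>G. f i j)" by (simp add: sum_negf)
  finally show ?thesis by simp
qed

lemma lap_grp_sum:
  assumes l: "l \<in> {1..M}" and p: "p < N (Suc l)" and y: "y \<in> carrier_vec (N l)"
  shows "(\<Sum>i\<in>grp k l p. (LapD N adj l *\<^sub>v y) $ i) = 0"
proof -
  let ?G = "grp k l p"
  have "(\<Sum>i\<in>?G. (LapD N adj l *\<^sub>v y) $ i) = (\<Sum>i\<in>?G. \<Sum>j\<in>?G. if adj l i j then y $ i - y $ j else 0)"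
  proof (rule sum.cong[OF refl])
    fix i assume i: "i \<in> ?G"
    have "(LapD N adj l *\<^sub>v y) $ i = (\<Sum>j\<in>{q \<in> ?G. adj l i q}. y $ i - y $ j)"
      using lap_mv[OF l y grp_sub[OF l p i]] nb_sub[OF l p i] by simp
    also have "\<dots> = (\<Sum>j\<in>?G. if adj l i j then y $ i - y $ j else 0)"
      by (rule sum.inter_filter) (simp add: grp_def)
    finally show "(LapD N adj l *\<^sub>v y) $ i = (\<Sum>j\<in>?G. if adj l i j then y $ i - y $ j else 0)" .
  qed
  also have "\<dots> = 0"
    by (rule antisym_sum_zero) (use adj_sym l in \<open>auto simp: grp_def\<close>)
  finally show ?thesis .
qed

lemma max_principle:
  assumes l: "l \<in> {1..M}" and p: "p < N (Suc l)" and y: "y \<in> carrier_vec (N l)"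
    and L0: "\<forall>i\<in>grp k l p. (LapD N adj l *\<^sub>v y) $ i = 0"
  shows "\<forall>i\<in>grp k l p. \<forall>j\<in>grp k l p. y $ i = y $ j"
proof -
  let ?G = "grp k l p"
  have fin: "finite ?G" by (simp add: grp_def)
  have ne: "?G \<noteq> {}" using grp_first[OF l p] by auto
  define m where "m = Max ((\<lambda>i. y $ i) ` ?G)"
  have "m \<in> (\<lambda>i. y $ i) ` ?G" using Max_in[of "(\<lambda>i. y $ i) ` ?G"] fin ne m_def by auto
  then obtain i0 where i0: "i0 \<in> ?G" "y $ i0 = m" by auto
  have le: "y $ j \<le> m" if "j \<in> ?G" for j using that fin m_def by simp
  let ?R = "{(x, y). x \<in> ?G \<and> y \<in> ?G \<and> adj l x y}"
  have stp: "y $ x' = m" if "x \<in> ?G" "y $ x = m" "x' \<in> ?G" "adj l x x'" for x x'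
  proof -
    have "0 = (\<Sum>j\<in>{q \<in> ?G. adj l x q}. y $ x - y $ j)"
      using L0 that(1) lap_mv[OF l y grp_sub[OF l p that(1)]] nb_sub[OF l p that(1)] by simp
    then have "\<forall>j\<in>{q \<in> ?G. adj l x q}. y $ x - y $ j = 0"
      using sum_nonneg_eq_0_iff[of "{q \<in> ?G. adj l x q}" "\<lambda>j. y $ x - y $ j"] fin le that(2) by auto
    then show ?thesis using that by auto
  qed
  have all: "y $ j = m" if "(i0, j) \<in> ?R\<^sup>*" for j
    using that
  proof (induction rule: rtrancl_induct)
    case base then show ?case using i0 by simp
  next
    case (step x x')
    have "x \<in> ?G" "x' \<in> ?G" "adj l x x'" using step.hyps(2) by auto
    then show ?case using stp \<open>y $ x = m\<close> by blast
  qed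
  have "y $ j = m" if "j \<in> ?G" for j
    using all[OF adj_conn[rule_format, OF l p i0(1) that]] .
  then show ?thesis by simp
qed

lemma inj_real:
  assumes l: "l \<in> {1..M}" and y: "y \<in> carrier_vec (N l)" and z: "z \<in> carrier_vec (N (Suc l))"
    and e: "XX l *\<^sub>v y = BB l *\<^sub>v z"
  shows "\<exists>w\<in>carrier_vec (N (Suc l)). y = BB l *\<^sub>v w"
proof -
  have Lyi: "(LapD N adj l *\<^sub>v y) $ i = wt k a l i * z $ p"
    if i: "i \<in> grp k l p" and p: "p < N (Suc l)" for i p
  proof -
    have iN: "i < N l" using grp_sub[OF l p i] .
    have c1: "LapD N adj l *\<^sub>v y \<in> carrier_vec (N l)" by (rule mult_mat_vec_carrier[OF carriers(2) y])
    have "XX l *\<^sub>v y = Kmat N k a l *\<^sub>v (LapD N adj l *\<^sub>v y)"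
      using carriers(1,2) y by (rule assoc_mult_mat_vec)
    then have "(XX l *\<^sub>v y) $ i = (LapD N adj l *\<^sub>v y) $ i / wt k a l i"
      using K_mv[OF c1 iN] by simp
    moreover have "(XX l *\<^sub>v y) $ i = z $ p" using e B_mv[OF l z iN p i] by simp
    moreover have "wt k a l i > 0" using wt_pos l iN by auto
    ultimately show ?thesis by (metis divide_eq_eq less_irrefl mult.commute)
  qed
  have z0: "z $ p = 0" if p: "p < N (Suc l)" for p
  proof -
    have "0 = (\<Sum>i\<in>grp k l p. (LapD N adj l *\<^sub>v y) $ i)" using lap_grp_sum[OF l p y] by simp
    also have "\<dots> = (\<Sum>i\<in>grp k l p. wt k a l i * z $ p)"
      by (rule sum.cong[OF refl]) (rule Lyi[OF _ p])
    also have "\<dots> = (\<Sum>i\<in>grp k l p. wt k a l i) * z $ p"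
      by (simp add: sum_distrib_right)
    finally have "(\<Sum>i\<in>grp k l p. wt k a l i) * z $ p = 0" by simp
    moreover have "(\<Sum>i\<in>grp k l p. wt k a l i) > 0"
    proof (rule sum_pos)
      show "finite (grp k l p)" by (simp add: grp_def)
      show "grp k l p \<noteq> {}" using grp_first[OF l p] by auto
      fix i assume "i \<in> grp k l p"
      then show "0 < wt k a l i" using wt_pos l grp_sub[OF l p] by auto
    qed
    ultimately show ?thesis by simp
  qed
  have const: "\<forall>i\<in>grp k l p. \<forall>j\<in>grp k l p. y $ i = y $ j" if p: "p < N (Suc l)" for p
  proof -
    have "\<forall>i\<in>grp k l p. (LapD N adj l *\<^sub>v y) $ i = 0" using Lyi[OF _ p] z0[OF p] by simp
    then show ?thesis using max_principle[OF l p y] by blast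
  qed
  define w where "w = vec (N (Suc l)) (\<lambda>p. y $ (\<Sum>m<p. k l m))"
  have wc: "w \<in> carrier_vec (N (Suc l))" unfolding w_def by simp
  have "y = BB l *\<^sub>v w"
  proof (rule eq_vecI)
    fix i assume "i < dim_vec (BB l *\<^sub>v w)"
    then have i: "i < N l" by simp
    obtain p where p: "p < N (Suc l)" "i \<in> grp k l p" using grp_cover[OF l i] by blast
    have "(BB l *\<^sub>v w) $ i = w $ p" by (rule B_mv[OF l wc i p(1) p(2)])
    also have "\<dots> = y $ (\<Sum>m<p. k l m)" unfolding w_def using p(1) by simp
    also have "\<dots> = y $ i" using const[OF p(1)] grp_first[OF l p(1)] p(2) by blast
    finally show "y $ i = (BB l *\<^sub>v w) $ i" by simp
  next
    show "dim_vec y = dim_vec (BB l *\<^sub>v w)" using y by simp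
  qed
  then show ?thesis using wc by blast
qed
lemma inj_cplx:
  assumes l: "l \<in> {1..M}" and y: "y \<in> carrier_vec (N l)" and z: "z \<in> carrier_vec (N (Suc l))"
    and e: "mc (XX l) *\<^sub>v y = mc (BB l) *\<^sub>v z"
  shows "\<exists>w\<in>carrier_vec (N (Suc l)). y = mc (BB l) *\<^sub>v w"
proof -
  have "XX l *\<^sub>v map_vec Re y = BB l *\<^sub>v map_vec Re z"
    using re_mv[OF carriers(3) y] re_mv[OF carriers(4) z] e by simp
  then obtain w1 where w1: "w1 \<in> carrier_vec (N (Suc l))" "map_vec Re y = BB l *\<^sub>v w1"
    using inj_real[OF l _ _] y z by (metis map_carrier_vec)
  have "XX l *\<^sub>v map_vec Im y = BB l *\<^sub>v map_vec Im z"
    using im_mv[OF carriers(3) y] im_mv[OF carriers(4) z] e by simp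
  then obtain w2 where w2: "w2 \<in> carrier_vec (N (Suc l))" "map_vec Im y = BB l *\<^sub>v w2"
    using inj_real[OF l _ _] y z by (metis map_carrier_vec)
  define w where "w = vec (N (Suc l)) (\<lambda>j. Complex (w1 $ j) (w2 $ j))"
  have wc: "w \<in> carrier_vec (N (Suc l))" unfolding w_def by simp
  have rw: "map_vec Re w = w1" "map_vec Im w = w2" unfolding w_def using w1 w2 by (auto intro!: eq_vecI)
  have "y = mc (BB l) *\<^sub>v w"
  proof (rule eq_vecI)
    fix i assume "i < dim_vec (mc (BB l) *\<^sub>v w)"
    then have i: "i < N l" by simp
    have "Re (y $ i) = Re ((mc (BB l) *\<^sub>v w) $ i)"
      using arg_cong[OF w1(2), of "\<lambda>v. v $ i"] arg_cong[OF re_mv[OF carriers(4) wc], of "\<lambda>v. v $ i"] rw i y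
      by simp
    moreover have "Im (y $ i) = Im ((mc (BB l) *\<^sub>v w) $ i)"
      using arg_cong[OF w2(2), of "\<lambda>v. v $ i"] arg_cong[OF im_mv[OF carriers(4) wc], of "\<lambda>v. v $ i"] rw i y
      by simp
    ultimately show "y $ i = (mc (BB l) *\<^sub>v w) $ i" by (rule complex_eqI)
  qed (use y in simp)
  then show ?thesis using wc by blast
qed

lemma Bprod_Suc: "1 \<le> l \<Longrightarrow> Bprod N k (Suc l) = Bprod N k l * BB l"
  by (cases l) auto

lemma Cprod_Suc: "1 \<le> l \<Longrightarrow> Cprod N k c (Suc l) = CC l * Cprod N k c l"
  by (cases l) auto

lemma Bprod_car: "1 \<le> l \<Longrightarrow> Bprod N k l \<in> carrier_mat (N 1) (N l)"
proof (induction l)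
  case 0 then show ?case by simp
next
  case (Suc l)
  show ?case
  proof (cases "l = 0")
    case True then show ?thesis by simp
  next
    case False
    then have "Bprod N k (Suc l) = Bprod N k l * BB l" using Bprod_Suc by simp
    then show ?thesis using Suc.IH False carriers(4) by simp
  qed
qed

lemma Cprod_car: "1 \<le> l \<Longrightarrow> Cprod N k c l \<in> carrier_mat (N l) (N 1)"
proof (induction l)
  case 0 then show ?case by simp
next
  case (Suc l)
  show ?case
  proof (cases "l = 0")
    case True then show ?thesis by simp
  next
    case False
    then have "Cprod N k c (Suc l) = CC l * Cprod N k c l" using Cprod_Suc by simp
    moreover have "Cprod N k c l \<in> carrier_mat (N l) (N 1)" using Suc.IH False by simp
    ultimately show ?thesis using mult_carrier_mat[OF carriers(5)[of l]] by simp
  qed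
qed

lemma CB_prod: "1 \<le> l \<Longrightarrow> l \<le> M \<Longrightarrow> Cprod N k c l * Bprod N k l = 1\<^sub>m (N l)"
proof (induction l)
  case 0 then show ?case by simp
next
  case (Suc l)
  show ?case
  proof (cases "l = 0")
    case True then show ?thesis by simp
  next
    case False
    have l: "l \<in> {1..<M}" using False Suc.prems by auto
    have P: "Bprod N k l \<in> carrier_mat (N 1) (N l)" "Cprod N k c l \<in> carrier_mat (N l) (N 1)"
      using Bprod_car Cprod_car False by auto
    have "Cprod N k c (Suc l) * Bprod N k (Suc l) = (CC l * Cprod N k c l) * (Bprod N k l * BB l)"
      using Bprod_Suc Cprod_Suc False by simp
    also have "\<dots> = CC l * (Cprod N k c l * Bprod N k l) * BB l"
    proof -
      have "(CC l * Cprod N k c l) * (Bprod N k l * BB l) = CC l * (Cprod N k c l * (Bprod N k l * BB l))"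
        using P carriers by (intro assoc_mult_mat[of _ "N (Suc l)" "N l" _ "N 1" _ "N (Suc l)"]) auto
      also have "Cprod N k c l * (Bprod N k l * BB l) = (Cprod N k c l * Bprod N k l) * BB l"
        using P carriers by (intro assoc_mult_mat[symmetric, of _ "N l" "N 1" _ "N l" _ "N (Suc l)"]) auto
      also have "CC l * ((Cprod N k c l * Bprod N k l) * BB l) = CC l * (Cprod N k c l * Bprod N k l) * BB l"
        using P carriers by (intro assoc_mult_mat[symmetric, of _ "N (Suc l)" "N l" _ "N l" _ "N (Suc l)"]) auto
      finally show ?thesis .
    qed
    also have "\<dots> = CC l * BB l" using Suc.IH False Suc.prems carriers by simp
    also have "\<dots> = 1\<^sub>m (N (Suc l))" using CB_one[OF l] .
    finally show ?thesis .
  qed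
qed

lemma B_mv_c:
  assumes l: "l \<in> {1..M}" and w: "w \<in> carrier_vec (N (Suc l))" and i: "i < N l"
    and p: "p < N (Suc l)" and ip: "i \<in> grp k l p"
  shows "(mc (BB l) *\<^sub>v w) $ i = w $ p"
proof -
  have "(mc (BB l) *\<^sub>v w) $ i = (\<Sum>q\<in>{0..<N (Suc l)}. complex_of_real (if i \<in> grp k l q then 1 else 0) * w $ q)"
    using i w by (simp add: Bmat_def scalar_prod_def row_def)
  also have "\<dots> = (\<Sum>q\<in>{0..<N (Suc l)}. (if q = p then w $ q else 0))"
    by (rule sum.cong) (use ip grp_disj in auto)
  also have "\<dots> = w $ p" using p by (simp add: sum.delta)
  finally show ?thesis .
qed

lemma mc_car:
  "mc (XX l) \<in> carrier_mat (N l) (N l)"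
  "mc (BB l) \<in> carrier_mat (N l) (N (Suc l))" "mc (CC l) \<in> carrier_mat (N (Suc l)) (N l)"
  using carriers by auto

lemma B0_c:
  assumes l: "l \<in> {1..M}" and w: "w \<in> carrier_vec (N (Suc l))"
  shows "(mc (BB l) *\<^sub>v w) $ 0 = w $ 0"
  using B_mv_c[OF l w _ NposS[OF l] zero_grp[OF l]] Npos l by auto

lemma main_ind:
  "j < M \<Longrightarrow>
     Tr N k adj a c M j \<in> carrier_mat (N (M - j)) (N (M - j))
   \<and> mat (N 1) (N 1) (\<lambda>ij. \<Sum>m\<in>{M - j..M}. Lmat N k adj a c m $$ ij)
       = Bprod N k (M - j) * Tr N k adj a c M j * Cprod N k c (M - j)
   \<and> (\<forall>\<mu>. \<mu> \<noteq> 0 \<longrightarrow> (eigenvalue (mc (Tr N k adj a c M j)) \<mu> \<longleftrightarrow> (\<exists>m\<in>{M - j..M}. eigenvalue (mc (XX m)) \<mu>)))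
   \<and> (\<exists>u\<in>carrier_vec (N (M - j)). u $ 0 = 1 \<and> mc (Tr N k adj a c M j) *\<^sub>v u = 0\<^sub>v (N (M - j))
        \<and> kerp (mc (Tr N k adj a c M j)) u (N (M - j)))"
proof (induction j)
  case 0
  have lM: "M \<in> {1..M}" using M2 by auto
  have Lc: "Lmat N k adj a c M \<in> carrier_mat (N 1) (N 1)"
    unfolding Lmat_def using Bprod_car[of M] Cprod_car[of M] carriers M2 by auto
  have I2: "mat (N 1) (N 1) (\<lambda>ij. \<Sum>m\<in>{M..M}. Lmat N k adj a c m $$ ij) = Lmat N k adj a c M"
    by (rule eq_matI) (use Lc in auto)
  define one where "one = vec (N (Suc M)) (\<lambda>_. 1::complex)"
  have onec: "one \<in> carrier_vec (N (Suc M))" unfolding one_def by simp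
  define u where "u = mc (BB M) *\<^sub>v one"
  have uc: "u \<in> carrier_vec (N M)" unfolding u_def carrier_vec_def by simp
  have u0: "u $ 0 = 1" unfolding u_def using B0_c[OF lM onec] Ntop by (simp add: one_def)
  have XBc: "mc (XX M) * mc (BB M) = 0\<^sub>m (N M) (N (Suc M))"
    using mc_mult[OF carriers(3) carriers(4), of M] XB_zero[OF lM] mc_zero by simp
  have XBw: "mc (XX M) *\<^sub>v (mc (BB M) *\<^sub>v w) = 0\<^sub>v (N M)" if w: "w \<in> carrier_vec (N (Suc M))" for w
  proof -
    have "mc (XX M) *\<^sub>v (mc (BB M) *\<^sub>v w) = (mc (XX M) * mc (BB M)) *\<^sub>v w"
      using w carriers by (intro assoc_mult_mat_vec[symmetric, of _ "N M" "N M" _ "N (Suc M)"]) auto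
    then show ?thesis using XBc w by simp
  qed
  have Xu: "mc (XX M) *\<^sub>v u = 0\<^sub>v (N M)" unfolding u_def using XBw[OF onec] .
  have K: "kerp (mc (XX M)) u (N M)" unfolding kerp_def
  proof (intro ballI allI impI)
    fix y cc assume y: "y \<in> carrier_vec (N M)" and e: "mc (XX M) *\<^sub>v y = cc \<cdot>\<^sub>v u"
    have "cc \<cdot>\<^sub>v u = mc (BB M) *\<^sub>v (cc \<cdot>\<^sub>v one)" unfolding u_def
      using mult_mat_vec[OF mc_car(2) onec, of cc] by simp
    then obtain w where w: "w \<in> carrier_vec (N (Suc M))" "y = mc (BB M) *\<^sub>v w"
      using inj_cplx[OF lM y, of "cc \<cdot>\<^sub>v one"] e onec by auto
    have "w = (w $ 0) \<cdot>\<^sub>v one" using w(1) Ntop by (intro eq_vecI) (auto simp: one_def)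
    then have "y = w $ 0 \<cdot>\<^sub>v u" unfolding w(2) u_def
      using mult_mat_vec[OF mc_car(2) onec, of "w $ 0"] by simp
    then show "\<exists>d. y = d \<cdot>\<^sub>v u" by blast
  qed
  show ?case
    using I2 Xu K u0 uc carriers(3)[of M] by (auto simp: Lmat_def)
next
  case (Suc j)
  have jM: "j < M" using Suc.prems by simp
  note IH = Suc.IH[OF jM]
  define l where "l = M - Suc j"
  have lS: "M - j = Suc l" using Suc.prems l_def by simp
  have lM: "l \<in> {1..M}" and lM': "l \<in> {1..<M}" using Suc.prems l_def by auto
  have ins: "{l..M} = insert l {Suc l..M}" using lM by auto
  let ?T' = "Tr N k adj a c M j"
  let ?T = "Tr N k adj a c M (Suc j)"
  note cl = carriers[of l]
  have Teq: "?T = XX l + BB l * ?T' * CC l" using l_def by simp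
  have T'c: "?T' \<in> carrier_mat (N (Suc l)) (N (Suc l))" using IH lS by simp
  have Tc: "?T \<in> carrier_mat (N l) (N l)" unfolding Teq using T'c cl by simp
  have Pc: "Bprod N k l \<in> carrier_mat (N 1) (N l)" "Cprod N k c l \<in> carrier_mat (N l) (N 1)"
    using Bprod_car Cprod_car lM by auto
  have Lc: "Lmat N k adj a c l \<in> carrier_mat (N 1) (N 1)"
    unfolding Lmat_def using Pc cl by auto
  have I2: "mat (N 1) (N 1) (\<lambda>ij. \<Sum>m\<in>{l..M}. Lmat N k adj a c m $$ ij)
      = Bprod N k l * ?T * Cprod N k c l"
  proof -
    have "mat (N 1) (N 1) (\<lambda>ij. \<Sum>m\<in>{l..M}. Lmat N k adj a c m $$ ij)
        = Lmat N k adj a c l + mat (N 1) (N 1) (\<lambda>ij. \<Sum>m\<in>{Suc l..M}. Lmat N k adj a c m $$ ij)"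
      by (rule eq_matI) (use Lc in \<open>auto simp: ins\<close>)
    also have "mat (N 1) (N 1) (\<lambda>ij. \<Sum>m\<in>{Suc l..M}. Lmat N k adj a c m $$ ij)
        = Bprod N k (Suc l) * ?T' * Cprod N k c (Suc l)" using IH lS by simp
    also have "\<dots> = (Bprod N k l * BB l) * ?T' * (CC l * Cprod N k c l)"
      using Bprod_Suc Cprod_Suc lM by simp
    also have "\<dots> = Bprod N k l * (BB l * ?T' * CC l) * Cprod N k c l"
      by (rule assoc5[OF Pc(1) carriers(4) T'c carriers(5) Pc(2)])
    also have "Lmat N k adj a c l = Bprod N k l * XX l * Cprod N k c l" unfolding Lmat_def ..
    also have "Bprod N k l * XX l * Cprod N k c l + Bprod N k l * (BB l * ?T' * CC l) * Cprod N k c l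
        = Bprod N k l * (XX l + BB l * ?T' * CC l) * Cprod N k c l"
      using T'c cl Pc by (intro distrib3[symmetric]) auto
    finally show ?thesis unfolding Teq .
  qed
  have mT: "mc ?T = mc (XX l) + mc (BB l) * mc ?T' * mc (CC l)"
  proof -
    have "mc ?T = mc (XX l) + mc (BB l * ?T' * CC l)" unfolding Teq
      using T'c cl by (intro mc_add) auto
    also have "mc (BB l * ?T' * CC l) = mc (BB l * ?T') * mc (CC l)"
      using T'c cl by (intro mc_mult) auto
    also have "mc (BB l * ?T') = mc (BB l) * mc ?T'"
      using T'c cl by (intro mc_mult) auto
    finally show ?thesis .
  qed
  have mCB: "mc (CC l) * mc (BB l) = 1\<^sub>m (N (Suc l))"
    using mc_mult[OF carriers(5) carriers(4), of l] CB_one[OF lM'] mc_one by simp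
  have mXB: "mc (XX l) * mc (BB l) = 0\<^sub>m (N l) (N (Suc l))"
    using mc_mult[OF carriers(3) carriers(4), of l] XB_zero[OF lM] mc_zero by simp
  have mT'c: "mc ?T' \<in> carrier_mat (N (Suc l)) (N (Suc l))" using T'c by simp
  have I3: "\<forall>\<mu>. \<mu> \<noteq> 0 \<longrightarrow> (eigenvalue (mc ?T) \<mu> \<longleftrightarrow> (\<exists>m\<in>{l..M}. eigenvalue (mc (XX m)) \<mu>))"
  proof (intro allI impI)
    fix \<mu> :: complex assume mu: "\<mu> \<noteq> 0"
    have "eigenvalue (mc ?T) \<mu> \<longleftrightarrow> eigenvalue (mc (XX l)) \<mu> \<or> eigenvalue (mc ?T') \<mu>"
      by (rule eig_step[OF mc_car(1) mc_car(2) mc_car(3) mT'c mCB mXB mT mu])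
    also have "eigenvalue (mc ?T') \<mu> \<longleftrightarrow> (\<exists>m\<in>{Suc l..M}. eigenvalue (mc (XX m)) \<mu>)"
      using IH lS mu by simp
    finally show "eigenvalue (mc ?T) \<mu> \<longleftrightarrow> (\<exists>m\<in>{l..M}. eigenvalue (mc (XX m)) \<mu>)"
      unfolding ins by blast
  qed
  obtain u' where u': "u' \<in> carrier_vec (N (Suc l))" "u' $ 0 = 1" "mc ?T' *\<^sub>v u' = 0\<^sub>v (N (Suc l))"
    "kerp (mc ?T') u' (N (Suc l))" using IH lS by auto
  have INJ: "\<forall>y\<in>carrier_vec (N l). \<forall>z\<in>carrier_vec (N (Suc l)). mc (XX l) *\<^sub>v y = mc (BB l) *\<^sub>v z
      \<longrightarrow> (\<exists>w\<in>carrier_vec (N (Suc l)). y = mc (BB l) *\<^sub>v w)"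
    using inj_cplx[OF lM] by blast
  note ks = ker_step[OF mc_car(1) mc_car(2) mc_car(3) mT'c mCB mXB mT INJ u'(1) u'(3) u'(4)]
  have uc: "mc (BB l) *\<^sub>v u' \<in> carrier_vec (N l)" unfolding carrier_vec_def by simp
  have u0: "(mc (BB l) *\<^sub>v u') $ 0 = 1" using B0_c[OF lM u'(1)] u'(2) by simp
  have lj: "M - Suc j = l" using l_def by simp
  show ?case unfolding lj using Tc I2 I3 ks uc u0 by blast
qed

lemma final:
  "eigs (Ltot N k adj a c M) = {0} \<union> (\<Union>l\<in>{1..M}. eigs (Lmat N k adj a c l) - {0})
   \<and> alg_mult (Ltot N k adj a c M) 0 = 1"
proof -
  have jM: "M - 1 < M" using M2 by simp
  have M1: "M - (M - 1) = 1" using M2 by simp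
  let ?T = "Tr N k adj a c M (M - 1)"
  note mi = main_ind[OF jM, unfolded M1]
  have Tc: "?T \<in> carrier_mat (N 1) (N 1)" using mi by blast
  have N1: "N 1 > 0" using Npos M2 by auto
  have "Ltot N k adj a c M = Bprod N k 1 * ?T * Cprod N k c 1"
    unfolding Ltot_def using mi by blast
  also have "\<dots> = ?T" using Tc by simp
  finally have LT: "Ltot N k adj a c M = ?T" .
  obtain u where u: "u \<in> carrier_vec (N 1)" "u $ 0 = 1" "mc ?T *\<^sub>v u = 0\<^sub>v (N 1)" "kerp (mc ?T) u (N 1)"
    using mi by blast
  have mTc: "mc ?T \<in> carrier_mat (N 1) (N 1)" using Tc by simp
  have unz: "u \<noteq> 0\<^sub>v (N 1)" using u(2) N1 by auto
  have z0: "mc ?T *\<^sub>v u = 0 \<cdot>\<^sub>v u" using u(3) u(1) by (intro eq_vecI) auto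
  have ev0: "eigenvalue (mc ?T) 0" by (rule eigenvalueI[OF mTc u(1) unz z0])
  have evL: "eigenvalue (mc (Lmat N k adj a c l)) z \<longleftrightarrow> eigenvalue (mc (XX l)) z"
    if l: "l \<in> {1..M}" and z: "z \<noteq> 0" for l z
  proof -
    have Pc: "Bprod N k l \<in> carrier_mat (N 1) (N l)" "Cprod N k c l \<in> carrier_mat (N l) (N 1)"
      using Bprod_car Cprod_car l by auto
    have "mc (Lmat N k adj a c l) = mc (Bprod N k l * XX l) * mc (Cprod N k c l)"
      unfolding Lmat_def using Pc carriers[of l] by (intro mc_mult) auto
    also have "mc (Bprod N k l * XX l) = mc (Bprod N k l) * mc (XX l)"
      using Pc carriers[of l] by (intro mc_mult) auto
    finally have e: "mc (Lmat N k adj a c l) = mc (Bprod N k l) * mc (XX l) * mc (Cprod N k c l)" .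
    have QP: "mc (Cprod N k c l) * mc (Bprod N k l) = 1\<^sub>m (N l)"
      using mc_mult[OF Pc(2) Pc(1)] CB_prod l mc_one by simp
    show ?thesis unfolding e
      by (rule eig_prod[of _ "N 1" "N l"]) (use Pc mc_car(1) QP z in auto)
  qed
  have "eigs (Ltot N k adj a c M) = {0} \<union> (\<Union>l\<in>{1..M}. eigs (Lmat N k adj a c l) - {0})"
  proof (rule Set.set_eqI)
    fix z :: complex
    show "z \<in> eigs (Ltot N k adj a c M) \<longleftrightarrow> z \<in> {0} \<union> (\<Union>l\<in>{1..M}. eigs (Lmat N k adj a c l) - {0})"
    proof (cases "z = 0")
      case True then show ?thesis using ev0 LT unfolding eigs_def by simp
    next
      case False
      have "z \<in> eigs (Ltot N k adj a c M) \<longleftrightarrow> (\<exists>m\<in>{1..M}. eigenvalue (mc (XX m)) z)"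
        using mi False LT unfolding eigs_def by auto
      also have "\<dots> \<longleftrightarrow> (\<exists>m\<in>{1..M}. eigenvalue (mc (Lmat N k adj a c m)) z)"
        using evL False by auto
      finally show ?thesis using False unfolding eigs_def by auto
    qed
  qed
  moreover have "alg_mult (Ltot N k adj a c M) 0 = 1"
    unfolding alg_mult_def LT by (rule order_one[OF mTc u(1) _ N1 u(3) u(4)]) (simp add: u(2))
  ultimately show ?thesis by blast
qed

end

theorem theorem1:
  fixes M :: nat and N :: "nat \<Rightarrow> nat" and k :: "nat \<Rightarrow> nat \<Rightarrow> nat"
    and adj :: "nat \<Rightarrow> nat \<Rightarrow> nat \<Rightarrow> bool" and a :: "nat \<Rightarrow> real"
    and c :: "nat \<Rightarrow> nat \<Rightarrow> real"
  assumes M2: "M \<ge> 2"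
    and Npos: "\<forall>l\<in>{1..M}. N l > 0"
    and Ntop: "N (Suc M) = 1"
    and kpos: "\<forall>l\<in>{1..M}. \<forall>p<N (Suc l). k l p \<ge> 1"
    and ksum: "\<forall>l\<in>{1..M}. (\<Sum>p<N (Suc l). k l p) = N l"
    and adj_sym: "\<forall>l\<in>{1..M}. \<forall>i j. adj l i j \<longrightarrow> adj l j i"
    and adj_irrefl: "\<forall>l\<in>{1..M}. \<forall>i. \<not> adj l i i"
    and adj_grp: "\<forall>l\<in>{1..M}. \<forall>i j. adj l i j \<longrightarrow> (\<exists>p<N (Suc l). i \<in> grp k l p \<and> j \<in> grp k l p)"
    and adj_conn: "\<forall>l\<in>{1..M}. \<forall>p<N (Suc l). \<forall>i\<in>grp k l p. \<forall>j\<in>grp k l p.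
        (i, j) \<in> {(x, y). x \<in> grp k l p \<and> y \<in> grp k l p \<and> adj l x y}\<^sup>*"
    and apos: "\<forall>i<N 1. a i > 0"
    and c_nonneg: "\<forall>l\<in>{1..<M}. \<forall>i<N l. c l i \<ge> 0"
    and c_sum: "\<forall>l\<in>{1..<M}. \<forall>p<N (Suc l). (\<Sum>i\<in>grp k l p. c l i) = 1"
  shows "eigs (Ltot N k adj a c M)
           = {0} \<union> (\<Union>l\<in>{1..M}. eigs (Lmat N k adj a c l) - {0})
         \<and> alg_mult (Ltot N k adj a c M) 0 = 1"
proof -
  have "hier M N k adj a c" unfolding hier_def using assms by blast
  then interpret hier M N k adj a c .
  show ?thesis by (rule final)
qed


end
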